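(* Assume that $\mathbf{B}$ is regular (invertible). Let $\boldsymbol{\alpha},\boldsymbol{\beta}\in\triangle_q$ and $\boldsymbol{\gamma},\boldsymbol{\delta}\in\mathbb{R}^{q\times q}_{\geq0}$ satisfy $\sum_i\gamma_{ik}=\alpha_k$, $\sum_k\gamma_{ik}=\alpha_i$, $\sum_j\delta_{jl}=\beta_l$, $\sum_l\delta_{jl}=\beta_j$, and suppose that $(\boldsymbol{\alpha},\boldsymbol{\beta},\boldsymbol{\gamma},\boldsymbol{\delta})$ achieves equality in \[\max_{\boldsymbol{\alpha},\boldsymbol{\beta}}\ \max_{\boldsymbol{\gamma},\boldsymbol{\delta}\text{ satisfying the constraints}}\Psi_1^{\mathbf{B}\otimes\mathbf{B}}(\boldsymbol{\gamma},\boldsymbol{\delta})=2\max_{\boldsymbol{\alpha},\boldsymbol{\beta}}\Psi_1^{\mathbf{B}}(\boldsymbol{\alpha},\boldsymbol{\beta}),\] i.e. $\Psi_1^{\mathbf{B}\otimes\mathbf{B}}(\boldsymbol{\gamma},\boldsymbol{\delta})=2\max_{\boldsymbol{\alpha}',\boldsymbol{\beta}'}\Psi_1^{\mathbf{B}}(\boldsymbol{\alpha}',\boldsymbol{\beta}')$. Then $\gamma_{ik}=\alpha_i\alpha_k$ and $\delta_{jl}=\beta_j\beta_l$ for all $i,j,k,l\in[q]$.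
   Context: $\mathbf{B}$ is a symmetric $q\times q$ nonnegative matrix (irreducible, standing assumption), $\Delta\geq3$, $\triangle_q$ the probability simplex. For a symmetric nonnegative $m\times m$ matrix $\mathbf{A}$ and probability vectors $\mathbf{a},\mathbf{b}\in\triangle_m$, $\Psi_1^{\mathbf{A}}(\mathbf{a},\mathbf{b})=\max_{\mathbf{x}}[(\Delta-1)(\sum_ia_i\ln a_i+\sum_jb_j\ln b_j)+\Delta\sum_{i,j}x_{ij}(\ln A_{ij}-\ln x_{ij})]$ over nonnegative $\mathbf{x}\in\mathbb{R}^{m\times m}$ with row sums $a_i$ and column sums $b_j$ (conventions $\ln0=-\infty$, $0\ln0=0$). For $\mathbf{B}\otimes\mathbf{B}$ ($q^2$ spins indexed by pairs $(i,k)$, entry $B_{ij}B_{kl}$ between $(i,k)$ and $(j,l)$), $\boldsymbol{\gamma},\boldsymbol{\delta}$ are regarded as probability vectors indexed by pairs. *)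

theory Defs
  imports "HOL-Analysis.Analysis" "HOL-Library.Extended_Real"
begin

definition prob_simplex :: "('a::finite \<Rightarrow> real) \<Rightarrow> bool" where
  "prob_simplex a \<longleftrightarrow> (\<forall>i. a i \<ge> 0) \<and> (\<Sum>i\<in>UNIV. a i) = 1"

definition sym_nonneg_mat :: "('a::finite \<Rightarrow> 'a \<Rightarrow> real) \<Rightarrow> bool" where
  "sym_nonneg_mat A \<longleftrightarrow> (\<forall>i j. A i j = A j i) \<and> (\<forall>i j. A i j \<ge> 0)"

definition irreducible_mat :: "('a::finite \<Rightarrow> 'a \<Rightarrow> real) \<Rightarrow> bool" where
  "irreducible_mat A \<longleftrightarrow> (\<forall>i j. (i, j) \<in> {(u, v). A u v > 0}\<^sup>+)"

definition regular_mat :: "('a::finite \<Rightarrow> 'a \<Rightarrow> real) \<Rightarrow> bool" where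
  "regular_mat A \<longleftrightarrow> (\<exists>C. (\<forall>i k. (\<Sum>j\<in>UNIV. A i j * C j k) = (if i = k then 1 else 0))
                          \<and> (\<forall>i k. (\<Sum>j\<in>UNIV. C i j * A j k) = (if i = k then 1 else 0)))"

definition kron :: "('a \<Rightarrow> 'a \<Rightarrow> real) \<Rightarrow> ('b \<Rightarrow> 'b \<Rightarrow> real) \<Rightarrow> ('a \<times> 'b) \<Rightarrow> ('a \<times> 'b) \<Rightarrow> real" where
  "kron A C = (\<lambda>(i, k) (j, l). A i j * C k l)"

definition xlnx :: "real \<Rightarrow> real" where
  "xlnx t = (if t = 0 then 0 else t * ln t)"

text \<open>The term x (ln A - ln x) with conventions ln 0 = -infinity and 0 ln 0 = 0
  (so the term is 0 when x = 0 and -infinity when x > 0 and A = 0).\<close>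
definition cross_term :: "real \<Rightarrow> real \<Rightarrow> ereal" where
  "cross_term a x = (if x = 0 then 0 else if a = 0 then -\<infinity> else ereal (x * (ln a - ln x)))"

definition couplings :: "('a::finite \<Rightarrow> real) \<Rightarrow> ('a \<Rightarrow> real) \<Rightarrow> ('a \<Rightarrow> 'a \<Rightarrow> real) set" where
  "couplings a b = {x. (\<forall>i j. x i j \<ge> 0) \<and> (\<forall>i. (\<Sum>j\<in>UNIV. x i j) = a i) \<and> (\<forall>j. (\<Sum>i\<in>UNIV. x i j) = b j)}"

definition Psi1_obj :: "nat \<Rightarrow> ('a::finite \<Rightarrow> 'a \<Rightarrow> real) \<Rightarrow> ('a \<Rightarrow> real) \<Rightarrow> ('a \<Rightarrow> real) \<Rightarrow> ('a \<Rightarrow> 'a \<Rightarrow> real) \<Rightarrow> ereal" where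
  "Psi1_obj \<Delta> A a b x =
     ereal ((real \<Delta> - 1) * ((\<Sum>i\<in>UNIV. xlnx (a i)) + (\<Sum>j\<in>UNIV. xlnx (b j))))
     + ereal (real \<Delta>) * (\<Sum>(i, j)\<in>UNIV. cross_term (A i j) (x i j))"

text \<open>Psi_1^A(a,b): the maximum (supremum; it is attained) of the objective over couplings.\<close>
definition Psi1 :: "nat \<Rightarrow> ('a::finite \<Rightarrow> 'a \<Rightarrow> real) \<Rightarrow> ('a \<Rightarrow> real) \<Rightarrow> ('a \<Rightarrow> real) \<Rightarrow> ereal" where
  "Psi1 \<Delta> A a b = (SUP x\<in>couplings a b. Psi1_obj \<Delta> A a b x)"

end

theory Submission
  imports Defs
begin


lemma exp_strict: fixes z::real assumes "z \<noteq> 0" shows "1 + z < exp z"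
proof (cases "1 + z/2 \<ge> 0")
  case True
  have "exp z = exp (z/2) * exp (z/2)" by (simp flip: exp_add)
  also have "\<dots> \<ge> (1+z/2)*(1+z/2)" using True exp_ge_add_one_self[of "z/2"]
    by (intro mult_mono) auto
  finally have "exp z \<ge> 1 + z + z*z/4" by (simp add: algebra_simps)
  moreover have "z*z > 0" using assms by (metis linorder_neqE_linordered_idom mult_neg_neg mult_pos_pos)
  ultimately show ?thesis by linarith
next
  case False
  then have "1 + z < 0" by linarith
  then show ?thesis using exp_gt_zero[of z] by linarith
qed

lemma amgm_eq:
  fixes x y t :: real
  assumes t: "0 < t" "t < 1" and x: "x \<ge> 0" and y: "y \<ge> 0"
    and eq: "x powr t * y powr (1-t) = t*x + (1-t)*y"
  shows "x = y"
proof (cases "x = 0 \<or> y = 0")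
  case True
  then show ?thesis using eq t x y by auto
next
  case False
  then have xp: "x > 0" and yp: "y > 0" using x y by auto
  define Z where "Z = t * ln x + (1-t) * ln y"
  have m: "x powr t * y powr (1-t) = exp Z"
    using xp yp by (simp add: powr_def Z_def exp_add)
  have hx: "x = exp Z * exp (ln x - Z)" using xp by (simp flip: exp_add)
  have hy: "y = exp Z * exp (ln y - Z)" using yp by (simp flip: exp_add)
  show ?thesis
  proof (rule ccontr)
    assume "x \<noteq> y"
    then have "ln x \<noteq> ln y" using xp yp by auto
    moreover have "ln x - Z = (1-t)*(ln x - ln y)" unfolding Z_def by (simp add: algebra_simps)
    ultimately have "ln x - Z \<noteq> 0" using t by simp
    then have s1: "exp (ln x - Z) > 1 + (ln x - Z)" by (rule exp_strict)
    have s2: "exp (ln y - Z) \<ge> 1 + (ln y - Z)" by simp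
    have "t * exp (ln x - Z) + (1-t) * exp (ln y - Z) > t*(1 + (ln x - Z)) + (1-t)*(1 + (ln y - Z))"
      using mult_strict_left_mono[OF s1 t(1)] mult_left_mono[OF s2, of "1-t"] t by linarith
    also have "t*(1 + (ln x - Z)) + (1-t)*(1 + (ln y - Z)) = 1" unfolding Z_def by (simp add: algebra_simps)
    finally have "exp Z * (t * exp (ln x - Z) + (1-t) * exp (ln y - Z)) > exp Z" by simp
    then have "t*x + (1-t)*y > exp Z" by (subst hx, subst hy) (simp add: algebra_simps)
    then show False using eq m by simp
  qed
qed

lemma amgm_le:
  fixes x y t :: real
  assumes t: "0 < t" "t < 1" and x: "x \<ge> 0" and y: "y \<ge> 0"
  shows "x powr t * y powr (1-t) \<le> t*x + (1-t)*y"
proof (cases "x = 0 \<or> y = 0")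
  case True then show ?thesis using t x y by auto
next
  case False then show ?thesis using Youngs_inequality_0[of t "1-t" x y] t x y by auto
qed

definition SS :: "real \<Rightarrow> ('a::finite \<Rightarrow> 'a \<Rightarrow> real) \<Rightarrow> ('a \<Rightarrow> real) \<Rightarrow> ('a \<Rightarrow> real) \<Rightarrow> real" where
  "SS t A a b = (\<Sum>i\<in>UNIV. \<Sum>j\<in>UNIV. A i j * a i powr t * b j powr t)"

definition FF :: "real \<Rightarrow> ('a::finite \<Rightarrow> 'a \<Rightarrow> real) \<Rightarrow> real \<Rightarrow> ('a \<Rightarrow> real) \<Rightarrow> 'a \<Rightarrow> real" where
  "FF t A N b = (\<lambda>i. ((\<Sum>j\<in>UNIV. A i j * b j powr t) / N) powr (1/(1-t)))"

lemma SS_alt: "SS t A a b = (\<Sum>i\<in>UNIV. a i powr t * (\<Sum>j\<in>UNIV. A i j * b j powr t))"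
  unfolding SS_def by (simp add: sum_distrib_left algebra_simps)

lemma char_first:
  fixes A :: "'a::finite \<Rightarrow> 'a \<Rightarrow> real"
  assumes t: "0 < t" "t < 1" and A: "\<forall>i j. A i j \<ge> 0" and N: "N > 0"
    and maxN: "\<forall>a' b'. prob_simplex a' \<longrightarrow> prob_simplex b' \<longrightarrow> SS t A a' b' \<le> N"
    and a: "prob_simplex a" and b: "prob_simplex b" and eqN: "SS t A a b = N"
  shows "a = FF t A N b"
proof -
  define v where "v i = (\<Sum>j\<in>UNIV. A i j * b j powr t)" for i
  define u where "u i = (v i / N) powr (1/(1-t))" for i
  have v0: "v i \<ge> 0" for i unfolding v_def using A by (auto intro!: sum_nonneg)
  have u0: "u i \<ge> 0" for i unfolding u_def by simp
  have a0: "a i \<ge> 0" for i using a unfolding prob_simplex_def by auto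
  have suma: "(\<Sum>i\<in>UNIV. a i) = 1" using a unfolding prob_simplex_def by auto
  have uk: "u i powr (1-t) = v i / N" for i
  proof -
    have "u i powr (1-t) = (v i / N) powr (1/(1-t) * (1-t))" unfolding u_def by (simp add: powr_powr)
    also have "\<dots> = v i / N" using t v0[of i] N by simp
    finally show ?thesis .
  qed
  have vN: "v i = N * u i powr (1-t)" for i using uk[of i] N by simp
  have uu: "u i powr t * u i powr (1-t) = u i" for i
  proof -
    have "u i powr t * u i powr (1-t) = u i powr (t + (1-t))" by (rule powr_add[symmetric])
    then show ?thesis using u0[of i] by (simp add: abs_of_nonneg)
  qed
  define U where "U = (\<Sum>i\<in>UNIV. u i)"
  have U0: "U \<ge> 0" unfolding U_def using u0 by (simp add: sum_nonneg)
  have U1: "U \<le> 1"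
  proof (cases "U = 0")
    case True then show ?thesis by simp
  next
    case False
    then have Up: "U > 0" using U0 by simp
    define a' where "a' i = u i / U" for i
    have pa': "prob_simplex a'" unfolding prob_simplex_def a'_def
      using u0 Up by (auto simp: sum_divide_distrib[symmetric] U_def)
    have "SS t A a' b = (\<Sum>i\<in>UNIV. a' i powr t * v i)" unfolding SS_alt v_def by simp
    also have "\<dots> = (\<Sum>i\<in>UNIV. (N / U powr t) * (u i powr t * u i powr (1-t)))"
      unfolding a'_def using u0 Up by (intro sum.cong) (auto simp: powr_divide vN)
    also have "\<dots> = (N / U powr t) * U" unfolding uu U_def by (simp add: sum_distrib_left)
    also have "\<dots> = N * U powr (1-t)" using Up by (simp add: powr_diff field_simps)
    finally have "N * U powr (1-t) \<le> N" using maxN pa' b by metis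
    then have "U powr (1-t) \<le> 1" using N by simp
    show ?thesis
    proof (rule ccontr)
      assume "\<not> U \<le> 1"
      then have "1 powr (1-t) < U powr (1-t)" using t by (intro powr_less_mono2) auto
      then show False using \<open>U powr (1-t) \<le> 1\<close> by simp
    qed
  qed
  have ineq: "a i powr t * u i powr (1-t) \<le> t * a i + (1-t) * u i" for i
    using amgm_le[OF t a0 u0] .
  have "N = (\<Sum>i\<in>UNIV. a i powr t * v i)" using eqN unfolding SS_alt v_def by simp
  also have "\<dots> = N * (\<Sum>i\<in>UNIV. a i powr t * u i powr (1-t))"
    unfolding vN by (simp add: sum_distrib_left algebra_simps)
  finally have s1: "(\<Sum>i\<in>UNIV. a i powr t * u i powr (1-t)) = 1" using N by simp
  have s2': "(\<Sum>i\<in>UNIV. t * a i + (1-t) * u i) = t * (\<Sum>i\<in>UNIV. a i) + (1-t) * (\<Sum>i\<in>UNIV. u i)"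
    by (simp only: sum.distrib sum_distrib_left)
  have s2: "(\<Sum>i\<in>UNIV. t * a i + (1-t) * u i) = t + (1-t) * U"
    unfolding s2' suma U_def by simp
  have "(\<Sum>i\<in>UNIV. (t * a i + (1-t) * u i) - a i powr t * u i powr (1-t)) = t + (1-t)*U - 1"
    by (simp only: sum_subtractf s1 s2)
  also have "\<dots> = (1-t) * (U - 1)" by (simp add: algebra_simps)
  also have "\<dots> \<le> 0" using U1 t by (intro mult_nonneg_nonpos) auto
  finally have le0: "(\<Sum>i\<in>UNIV. (t * a i + (1-t) * u i) - a i powr t * u i powr (1-t)) \<le> 0" .
  have "\<forall>i\<in>UNIV. (t * a i + (1-t) * u i) - a i powr t * u i powr (1-t) = 0"
  proof -
    have nn: "\<forall>i\<in>UNIV. (t * a i + (1-t) * u i) - a i powr t * u i powr (1-t) \<ge> 0" using ineq by simp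
    then have "(\<Sum>i\<in>UNIV. (t * a i + (1-t) * u i) - a i powr t * u i powr (1-t)) \<ge> 0" by (intro sum_nonneg) auto
    then have "(\<Sum>i\<in>UNIV. (t * a i + (1-t) * u i) - a i powr t * u i powr (1-t)) = 0" using le0 by linarith
    then show ?thesis using nn by (subst (asm) sum_nonneg_eq_0_iff) auto
  qed
  then have "a i = u i" for i using amgm_eq[OF t a0 u0] by auto
  then show ?thesis unfolding FF_def u_def v_def by auto
qed

lemma xlnx_eq: "xlnx t = t * ln t" unfolding xlnx_def by simp

lemma sum_pairs: "(\<Sum>(i,j)\<in>(UNIV::('a::finite \<times> 'b::finite) set). f i j) = (\<Sum>i\<in>UNIV. \<Sum>j\<in>UNIV. f i j)"
  by (simp add: sum.cartesian_product UNIV_Times_UNIV[symmetric] del: UNIV_Times_UNIV)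

lemma coupling_le:
  assumes "x \<in> couplings a b"
  shows "x i j \<ge> 0" "x i j \<le> a i" "x i j \<le> b j" "(\<Sum>j\<in>UNIV. x i j) = a i" "(\<Sum>i\<in>UNIV. x i j) = b j"
proof -
  have x0: "\<forall>i j. x i j \<ge> 0" using assms unfolding couplings_def by auto
  show "x i j \<ge> 0" using x0 by auto
  show r: "(\<Sum>j\<in>UNIV. x i j) = a i" "(\<Sum>i\<in>UNIV. x i j) = b j" using assms unfolding couplings_def by auto
  have "x i j \<le> (\<Sum>j\<in>UNIV. x i j)" using x0 by (intro member_le_sum) auto
  then show "x i j \<le> a i" using r by simp
  have "x i j \<le> (\<Sum>i\<in>UNIV. x i j)" using x0 by (intro member_le_sum) auto
  then show "x i j \<le> b j" using r by simp
qed

lemma obj_real: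
  fixes A :: "'a::finite \<Rightarrow> 'a \<Rightarrow> real"
  assumes pos: "\<forall>i j. x i j > 0 \<longrightarrow> A i j > 0" and x0: "\<forall>i j. x i j \<ge> 0"
  shows "Psi1_obj D A a b x = ereal ((real D - 1) * ((\<Sum>i\<in>UNIV. a i * ln (a i)) + (\<Sum>j\<in>UNIV. b j * ln (b j)))
          + real D * (\<Sum>i\<in>UNIV. \<Sum>j\<in>UNIV. x i j * (ln (A i j) - ln (x i j))))"
proof -
  have ct: "cross_term (A i j) (x i j) = ereal (x i j * (ln (A i j) - ln (x i j)))" for i j
  proof -
    have "x i j = 0 \<or> A i j > 0" using pos[rule_format, of i j] x0[rule_format, of i j] by force
    then show ?thesis unfolding cross_term_def by auto
  qed
  have "(\<Sum>(i, j)\<in>UNIV. cross_term (A i j) (x i j)) = (\<Sum>(i, j)\<in>UNIV. ereal (x i j * (ln (A i j) - ln (x i j))))"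
    by (simp add: ct)
  also have "\<dots> = ereal (\<Sum>(i, j)\<in>UNIV. x i j * (ln (A i j) - ln (x i j)))"
    by (simp add: case_prod_beta' del: sum_ereal) (simp add: case_prod_unfold)
  also have "\<dots> = ereal (\<Sum>i\<in>UNIV. \<Sum>j\<in>UNIV. x i j * (ln (A i j) - ln (x i j)))"
    by (simp add: sum_pairs[of "\<lambda>i j. x i j * (ln (A i j) - ln (x i j))"])
  finally show ?thesis unfolding Psi1_obj_def xlnx_eq by simp
qed

lemma gibbs_identity:
  fixes A :: "'a::finite \<Rightarrow> 'a \<Rightarrow> real"
  assumes D: "D > 0" and t: "t = (D - 1) / D"
    and x: "x \<in> couplings a b" and pos: "\<forall>i j. x i j > 0 \<longrightarrow> A i j > 0"
  shows "(D - 1) * ((\<Sum>i\<in>UNIV. a i * ln (a i)) + (\<Sum>j\<in>UNIV. b j * ln (b j)))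
          + D * (\<Sum>i\<in>UNIV. \<Sum>j\<in>UNIV. x i j * (ln (A i j) - ln (x i j)))
       = D * (\<Sum>i\<in>UNIV. \<Sum>j\<in>UNIV. x i j * (ln (A i j * a i powr t * b j powr t) - ln (x i j)))"
proof -
  have trm: "x i j * (ln (A i j) - ln (x i j)) = x i j * (ln (A i j * a i powr t * b j powr t) - ln (x i j))
        - t * (x i j * ln (a i)) - t * (x i j * ln (b j))" for i j
  proof (cases "x i j > 0")
    case True
    then have "A i j > 0" using pos by auto
    moreover have "a i > 0" using True coupling_le(2)[OF x, of i j] by simp
    moreover have "b j > 0" using True coupling_le(3)[OF x, of i j] by simp
    ultimately have "ln (A i j * a i powr t * b j powr t) = ln (A i j) + t * ln (a i) + t * ln (b j)"
      by (simp add: ln_mult ln_powr)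
    then show ?thesis by (simp add: algebra_simps)
  next
    case False
    then have "x i j = 0" using coupling_le(1)[OF x, of i j] by simp
    then show ?thesis by simp
  qed
  have sa: "(\<Sum>i\<in>UNIV. \<Sum>j\<in>UNIV. x i j * ln (a i)) = (\<Sum>i\<in>UNIV. a i * ln (a i))"
  proof -
    have "(\<Sum>i\<in>UNIV. \<Sum>j\<in>UNIV. x i j * ln (a i)) = (\<Sum>i\<in>UNIV. (\<Sum>j\<in>UNIV. x i j) * ln (a i))"
      by (simp only: sum_distrib_right)
    then show ?thesis by (simp only: coupling_le(4)[OF x])
  qed
  have sb: "(\<Sum>i\<in>UNIV. \<Sum>j\<in>UNIV. x i j * ln (b j)) = (\<Sum>j\<in>UNIV. b j * ln (b j))"
  proof -
    have "(\<Sum>i\<in>UNIV. \<Sum>j\<in>UNIV. x i j * ln (b j)) = (\<Sum>j\<in>UNIV. \<Sum>i\<in>UNIV. x i j * ln (b j))"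
      by (rule sum.swap)
    also have "\<dots> = (\<Sum>j\<in>UNIV. (\<Sum>i\<in>UNIV. x i j) * ln (b j))"
      by (simp only: sum_distrib_right)
    finally show ?thesis by (simp only: coupling_le(5)[OF x])
  qed
  define C where "C = (\<Sum>i\<in>UNIV. \<Sum>j\<in>UNIV. x i j * (ln (A i j) - ln (x i j)))"
  define C' where "C' = (\<Sum>i\<in>UNIV. \<Sum>j\<in>UNIV. x i j * (ln (A i j * a i powr t * b j powr t) - ln (x i j)))"
  define X where "X = (\<Sum>i\<in>UNIV. a i * ln (a i)) + (\<Sum>j\<in>UNIV. b j * ln (b j))"
  have "C = C' - t * (\<Sum>i\<in>UNIV. \<Sum>j\<in>UNIV. x i j * ln (a i)) - t * (\<Sum>i\<in>UNIV. \<Sum>j\<in>UNIV. x i j * ln (b j))"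
    unfolding C_def C'_def trm by (simp only: sum_subtractf sum_distrib_left)
  then have CC: "C = C' - t * X" unfolding sa sb X_def by (simp add: algebra_simps)
  have Dt: "D * t = D - 1" using D unfolding t by simp
  have "(D - 1) * X + D * C = (D - 1) * X + D * C' - (D * t) * X" unfolding CC by (simp add: algebra_simps)
  also have "\<dots> = D * C'" unfolding Dt by simp
  finally show ?thesis unfolding C_def C'_def X_def .
qed

lemma gibbs_bound:
  fixes A :: "'a::finite \<Rightarrow> 'a \<Rightarrow> real"
  assumes A: "\<forall>i j. A i j \<ge> 0" and a: "prob_simplex a"
    and x: "x \<in> couplings a b" and pos: "\<forall>i j. x i j > 0 \<longrightarrow> A i j > 0"
  shows "SS t A a b > 0"
    and "(\<Sum>i\<in>UNIV. \<Sum>j\<in>UNIV. x i j * (ln (A i j * a i powr t * b j powr t) - ln (x i j))) \<le> ln (SS t A a b)"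
proof -
  define y where "y i j = A i j * a i powr t * b j powr t" for i j
  define S where "S = SS t A a b"
  have y0: "y i j \<ge> 0" for i j unfolding y_def using A by simp
  have Sy: "S = (\<Sum>i\<in>UNIV. \<Sum>j\<in>UNIV. y i j)" unfolding S_def SS_def y_def ..
  have ypos: "y i j > 0" if "x i j > 0" for i j
  proof -
    have "A i j > 0" using pos that by auto
    moreover have "a i > 0" using that coupling_le(2)[OF x, of i j] by simp
    moreover have "b j > 0" using that coupling_le(3)[OF x, of i j] by simp
    ultimately show ?thesis unfolding y_def by simp
  qed
  have suma: "(\<Sum>i\<in>UNIV. a i) = 1" using a unfolding prob_simplex_def by auto
  then obtain i0 where "a i0 \<noteq> 0" by (metis sum.neutral zero_neq_one)
  then have "(\<Sum>j\<in>UNIV. x i0 j) \<noteq> 0" using coupling_le(4)[OF x] by simp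
  then obtain j0 where "x i0 j0 \<noteq> 0" by (metis sum.neutral)
  then have xj0: "x i0 j0 > 0" using coupling_le(1)[OF x, of i0 j0] by simp
  have "y i0 j0 \<le> (\<Sum>j\<in>UNIV. y i0 j)" using y0 by (intro member_le_sum) auto
  also have "\<dots> \<le> S" unfolding Sy using y0 by (intro member_le_sum) (auto intro: sum_nonneg)
  finally have Sp: "S > 0" using ypos[OF xj0] by simp
  then show "SS t A a b > 0" unfolding S_def .
  have trm: "x i j * (ln (y i j) - ln (x i j)) \<le> ln S * x i j + (1/S) * y i j - x i j" for i j
  proof (cases "x i j > 0")
    case True
    have yp: "y i j > 0" using ypos[OF True] .
    have "ln (y i j / (x i j * S)) \<le> y i j / (x i j * S) - 1"
      using yp True Sp by (intro ln_le_minus_one) simp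
    then have "ln (y i j) - ln (x i j) - ln S \<le> y i j / (x i j * S) - 1"
      using yp True Sp by (simp add: ln_div ln_mult)
    then have "x i j * (ln (y i j) - ln (x i j) - ln S) \<le> x i j * (y i j / (x i j * S) - 1)"
      using True by (intro mult_left_mono) auto
    moreover have "x i j * (y i j / (x i j * S) - 1) = (1/S) * y i j - x i j" using True Sp by (simp add: field_simps)
    moreover have "x i j * (ln (y i j) - ln (x i j) - ln S) = x i j * (ln (y i j) - ln (x i j)) - ln S * x i j"
      by (simp add: algebra_simps)
    ultimately show ?thesis by linarith
  next
    case False
    then have "x i j = 0" using coupling_le(1)[OF x, of i j] by simp
    then show ?thesis using y0[of i j] Sp by simp
  qed
  have sx: "(\<Sum>i\<in>UNIV. \<Sum>j\<in>UNIV. x i j) = 1" using suma coupling_le(4)[OF x] by simp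
  have "(\<Sum>i\<in>UNIV. \<Sum>j\<in>UNIV. x i j * (ln (y i j) - ln (x i j)))
      \<le> (\<Sum>i\<in>UNIV. \<Sum>j\<in>UNIV. ln S * x i j + (1/S) * y i j - x i j)"
    by (intro sum_mono trm)
  also have "\<dots> = ln S * (\<Sum>i\<in>UNIV. \<Sum>j\<in>UNIV. x i j) + (1/S) * (\<Sum>i\<in>UNIV. \<Sum>j\<in>UNIV. y i j)
        - (\<Sum>i\<in>UNIV. \<Sum>j\<in>UNIV. x i j)"
    by (simp only: sum.distrib sum_subtractf sum_distrib_left[symmetric])
  also have "\<dots> = ln S" using sx Sy Sp by simp
  finally show "(\<Sum>i\<in>UNIV. \<Sum>j\<in>UNIV. x i j * (ln (A i j * a i powr t * b j powr t) - ln (x i j))) \<le> ln (SS t A a b)"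
    unfolding y_def S_def .
qed



lemma cont_fst_nth: "continuous_on S (\<lambda>z::(real^'a) \<times> (real^'a). fst z $ i)"
  by (auto simp: continuous_on_def intro!: tendsto_vec_nth tendsto_fst tendsto_ident_at)
lemma cont_snd_nth: "continuous_on S (\<lambda>z::(real^'a) \<times> (real^'a). snd z $ i)"
  by (auto simp: continuous_on_def intro!: tendsto_vec_nth tendsto_snd tendsto_ident_at)

lemma cont_powr_nonneg:
  fixes g :: "'b::topological_space \<Rightarrow> real"
  assumes g: "continuous_on K g" and nn: "\<forall>z\<in>K. g z \<ge> 0" and t: "t > 0"
  shows "continuous_on K (\<lambda>z. g z powr t)"
  unfolding continuous_on_def
proof
  fix z assume z: "z \<in> K"
  have "(g \<longlongrightarrow> g z) (at z within K)" using g z by (simp add: continuous_on_def)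
  moreover have "\<forall>\<^sub>F x in at z within K. 0 \<le> g x"
    using nn by (auto simp: eventually_at_filter)
  ultimately show "((\<lambda>z. g z powr t) \<longlongrightarrow> g z powr t) (at z within K)"
    using t by (intro tendsto_powr2) auto
qed

lemma max_exists:
  fixes A :: "'a::finite \<Rightarrow> 'a \<Rightarrow> real"
  assumes t: "t > 0"
  shows "\<exists>a b. prob_simplex a \<and> prob_simplex b \<and>
     (\<forall>a' b'. prob_simplex a' \<longrightarrow> prob_simplex b' \<longrightarrow> SS t A a' b' \<le> SS t A a b)"
proof -
  define K :: "((real^'a) \<times> (real^'a)) set" where
    "K = {z. (\<forall>i. fst z $ i \<ge> 0) \<and> (\<forall>i. snd z $ i \<ge> 0) \<and> (\<Sum>i\<in>UNIV. fst z $ i) = 1 \<and> (\<Sum>i\<in>UNIV. snd z $ i) = 1}"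
  define f where "f z = SS t A (\<lambda>i. fst z $ i) (\<lambda>i. snd z $ i)" for z :: "(real^'a) \<times> (real^'a)"
  have Kchar: "z \<in> K \<longleftrightarrow> prob_simplex (\<lambda>i. fst z $ i) \<and> prob_simplex (\<lambda>i. snd z $ i)" for z
    unfolding K_def prob_simplex_def by auto
  have closedK: "closed K"
    unfolding K_def
    by (intro closed_Collect_conj closed_Collect_all closed_Collect_le closed_Collect_eq
        continuous_on_const cont_fst_nth cont_snd_nth continuous_on_sum)
  have boundK: "bounded K"
  proof -
    have "norm z \<le> 2" if "z \<in> K" for z
    proof -
      obtain x y where z: "z = (x, y)" by force
      have "norm x \<le> (\<Sum>i\<in>UNIV. \<bar>x $ i\<bar>)" by (rule norm_le_l1_cart)
      also have "\<dots> = 1" using that z unfolding K_def by simp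
      finally have nx: "norm x \<le> 1" .
      have "norm y \<le> (\<Sum>i\<in>UNIV. \<bar>y $ i\<bar>)" by (rule norm_le_l1_cart)
      also have "\<dots> = 1" using that z unfolding K_def by simp
      finally have ny: "norm y \<le> 1" .
      show ?thesis using norm_Pair_le[of x y] nx ny z by simp
    qed
    then show ?thesis unfolding bounded_iff by blast
  qed
  have compK: "compact K" using closedK boundK by (simp add: compact_eq_bounded_closed)
  define u :: "real^'a" where "u = (\<chi> i. 1 / real CARD('a))"
  have "(u, u) \<in> K" unfolding K_def u_def by simp
  then have neK: "K \<noteq> {}" by auto
  have contf: "continuous_on K f"
    unfolding f_def SS_def
    by (intro continuous_on_sum continuous_on_mult continuous_on_const cont_powr_nonneg
          cont_fst_nth cont_snd_nth t) (auto simp: K_def)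
  obtain z where zK: "z \<in> K" and zmax: "\<forall>y\<in>K. f y \<le> f z"
    using continuous_attains_sup[OF compK neK contf] by blast
  show ?thesis
  proof (intro exI conjI allI impI)
    show "prob_simplex (\<lambda>i. fst z $ i)" "prob_simplex (\<lambda>i. snd z $ i)" using zK Kchar by auto
    fix a' b' :: "'a \<Rightarrow> real"
    assume "prob_simplex a'" "prob_simplex b'"
    then have "((\<chi> i. a' i), (\<chi> i. b' i)) \<in> K" using Kchar by simp
    then have "f ((\<chi> i. a' i), (\<chi> i. b' i)) \<le> f z" using zmax by blast
    moreover have "vec_nth (vec_lambda a') = a'" "vec_nth (vec_lambda b') = b'" by (auto intro!: ext)
    ultimately show "SS t A a' b' \<le> SS t A (\<lambda>i. fst z $ i) (\<lambda>i. snd z $ i)" unfolding f_def by simp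
  qed
qed

lemma SS_sym:
  assumes "\<forall>i j. B i j = B j i"
  shows "SS t B a b = SS t B b a"
  unfolding SS_def
  by (subst sum.swap) (simp add: assms[rule_format, of _ "_"] mult_ac)

lemma SS_zero_left:
  assumes "\<forall>i. a i = 0" shows "SS t B a b = 0"
  using assms unfolding SS_def by simp

lemma SS_zero_right:
  assumes "\<forall>i. b i = 0" shows "SS t B a b = 0"
  using assms unfolding SS_def by simp

lemma SS_scale:
  assumes wa: "wa > 0" and wb: "wb > 0" and a: "\<forall>i. a i \<ge> 0" and b: "\<forall>i. b i \<ge> 0"
  shows "SS t B a b = wa powr t * wb powr t * SS t B (\<lambda>i. a i / wa) (\<lambda>j. b j / wb)"
proof -
  have trm: "B i j * a i powr t * b j powr t = wa powr t * wb powr t * (B i j * (a i / wa) powr t * (b j / wb) powr t)" for i j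
  proof -
    have e1: "(a i / wa) powr t = a i powr t / wa powr t" using a wa by (simp add: powr_divide)
    have e2: "(b j / wb) powr t = b j powr t / wb powr t" using b wb by (simp add: powr_divide)
    have "wa powr t > 0" "wb powr t > 0" using wa wb by auto
    then show ?thesis unfolding e1 e2 by (simp add: field_simps)
  qed
  show ?thesis unfolding SS_def sum_distrib_left by (simp only: trm)
qed

lemma nonneg_sum0:
  fixes a :: "'a::finite \<Rightarrow> real"
  assumes "\<forall>i. a i \<ge> 0" "(\<Sum>i\<in>UNIV. a i) = 0" shows "\<forall>i. a i = 0"
  using assms by (subst (asm) sum_nonneg_eq_0_iff) auto

lemma SS_bound_scaled:
  fixes B :: "'a::finite \<Rightarrow> 'a \<Rightarrow> real"
  assumes maxN: "\<forall>a' b'. prob_simplex a' \<longrightarrow> prob_simplex b' \<longrightarrow> SS t B a' b' \<le> N"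
    and N: "N > 0" and t: "t > 0"
    and a: "\<forall>i. a i \<ge> 0" and b: "\<forall>i. b i \<ge> 0"
  shows "SS t B a b \<le> N * (\<Sum>i\<in>UNIV. a i) powr t * (\<Sum>i\<in>UNIV. b i) powr t"
proof -
  define wa where "wa = (\<Sum>i\<in>UNIV. a i)"
  define wb where "wb = (\<Sum>i\<in>UNIV. b i)"
  have wa0: "wa \<ge> 0" unfolding wa_def using a by (simp add: sum_nonneg)
  have wb0: "wb \<ge> 0" unfolding wb_def using b by (simp add: sum_nonneg)
  show ?thesis
  proof (cases "wa = 0 \<or> wb = 0")
    case True
    then have "SS t B a b = 0"
      using nonneg_sum0[OF a] nonneg_sum0[OF b] SS_zero_left SS_zero_right unfolding wa_def wb_def by metis
    then show ?thesis using True t unfolding wa_def[symmetric] wb_def[symmetric] by auto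
  next
    case False
    then have wap: "wa > 0" and wbp: "wb > 0" using wa0 wb0 by auto
    have pa: "prob_simplex (\<lambda>i. a i / wa)" unfolding prob_simplex_def
      using a wap by (simp add: sum_divide_distrib[symmetric] wa_def[symmetric])
    have pb: "prob_simplex (\<lambda>i. b i / wb)" unfolding prob_simplex_def
      using b wbp by (simp add: sum_divide_distrib[symmetric] wb_def[symmetric])
    have "SS t B (\<lambda>i. a i / wa) (\<lambda>j. b j / wb) \<le> N" using maxN pa pb by blast
    then have "wa powr t * wb powr t * SS t B (\<lambda>i. a i / wa) (\<lambda>j. b j / wb) \<le> wa powr t * wb powr t * N"
      by (intro mult_left_mono) auto
    then show ?thesis unfolding SS_scale[OF wap wbp a b, of t B] wa_def[symmetric] wb_def[symmetric]
      by (simp add: mult_ac)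
  qed
qed

lemma rowsum_FF:
  fixes B :: "'a::finite \<Rightarrow> 'a \<Rightarrow> real"
  assumes t: "0 < t" "t < 1" and B0: "\<forall>i j. B i j \<ge> 0" and N: "N > 0"
    and aF: "a = FF t B N b"
  shows "(\<Sum>j\<in>UNIV. B i j * a i powr t * b j powr t / N) = a i"
proof -
  define v where "v = (\<Sum>j\<in>UNIV. B i j * b j powr t)"
  have v0: "v \<ge> 0" unfolding v_def using B0 by (auto intro!: sum_nonneg)
  have ai: "a i = (v / N) powr (1/(1-t))" using aF unfolding FF_def v_def by simp
  have a0: "a i \<ge> 0" unfolding ai by simp
  have "a i powr (1-t) = (v / N) powr (1/(1-t) * (1-t))" unfolding ai by (simp add: powr_powr)
  also have "\<dots> = v / N" using t v0 N by simp
  finally have k: "a i powr (1-t) = v / N" .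
  have "(\<Sum>j\<in>UNIV. B i j * a i powr t * b j powr t / N) = a i powr t * (v / N)"
    unfolding v_def by (simp add: sum_distrib_left sum_divide_distrib mult_ac)
  also have "\<dots> = a i powr t * a i powr (1-t)" unfolding k ..
  also have "\<dots> = a i powr (t + (1-t))" by (rule powr_add[symmetric])
  also have "\<dots> = a i" using a0 by simp
  finally show ?thesis .
qed

lemma mp_char:
  fixes B :: "'a::finite \<Rightarrow> 'a \<Rightarrow> real"
  assumes t: "0 < t" "t < 1" and B0: "\<forall>i j. B i j \<ge> 0" and Bs: "\<forall>i j. B i j = B j i" and N: "N > 0"
    and maxN: "\<forall>a' b'. prob_simplex a' \<longrightarrow> prob_simplex b' \<longrightarrow> SS t B a' b' \<le> N"
    and a: "prob_simplex a" and b: "prob_simplex b" and eqN: "SS t B a b = N"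
  shows "a = FF t B N b" "b = FF t B N a"
proof -
  show "a = FF t B N b" by (rule char_first[OF t B0 N maxN a b eqN])
  have maxN': "\<forall>a' b'. prob_simplex a' \<longrightarrow> prob_simplex b' \<longrightarrow> SS t B a' b' \<le> N"
    using maxN by blast
  show "b = FF t B N a"
    by (rule char_first[OF t B0 N maxN' b a]) (simp add: SS_sym[OF Bs, of t b a] eqN)
qed

lemma achieve:
  fixes B :: "'a::finite \<Rightarrow> 'a \<Rightarrow> real"
  assumes D: "real D > 0" and tdef: "t = (real D - 1) / real D" and t: "0 < t" "t < 1"
    and B0: "\<forall>i j. B i j \<ge> 0" and Bs: "\<forall>i j. B i j = B j i" and N: "N > 0"
    and maxN: "\<forall>a' b'. prob_simplex a' \<longrightarrow> prob_simplex b' \<longrightarrow> SS t B a' b' \<le> N"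
    and a: "prob_simplex a" and b: "prob_simplex b" and eqN: "SS t B a b = N"
  shows "\<exists>x\<in>couplings a b. Psi1_obj D B a b x = ereal (real D * ln N)"
proof -
  have aF: "a = FF t B N b" and bF: "b = FF t B N a" using mp_char[OF t B0 Bs N maxN a b eqN] by auto
  define x where "x i j = B i j * a i powr t * b j powr t / N" for i j
  have x0: "\<forall>i j. x i j \<ge> 0" unfolding x_def using B0 N by simp
  have rows: "(\<Sum>j\<in>UNIV. x i j) = a i" for i unfolding x_def by (rule rowsum_FF[OF t B0 N aF])
  have cols: "(\<Sum>i\<in>UNIV. x i j) = b j" for j
  proof -
    have "(\<Sum>i\<in>UNIV. x i j) = (\<Sum>i\<in>UNIV. B j i * b j powr t * a i powr t / N)"
      unfolding x_def using Bs by (simp add: mult_ac)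
    also have "\<dots> = b j" by (rule rowsum_FF[OF t B0 N bF])
    finally show ?thesis .
  qed
  have xc: "x \<in> couplings a b" unfolding couplings_def using x0 rows cols by auto
  have pos: "\<forall>i j. x i j > 0 \<longrightarrow> B i j > 0"
  proof (intro allI impI)
    fix i j assume "x i j > 0"
    then have "B i j \<noteq> 0" unfolding x_def by auto
    then show "B i j > 0" using B0 by (simp add: order_le_neq_trans)
  qed
  have eqx: "x i j * (ln (B i j * a i powr t * b j powr t) - ln (x i j)) = x i j * ln N" for i j
  proof (cases "x i j > 0")
    case True
    have "B i j * a i powr t * b j powr t = N * x i j" unfolding x_def using N by simp
    then show ?thesis using True N by (simp add: ln_mult)
  next
    case False
    then have "x i j = 0" using x0[rule_format, of i j] by linarith
    then show ?thesis by simp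
  qed
  have sa: "(\<Sum>i\<in>UNIV. a i) = 1" using a unfolding prob_simplex_def by simp
  have "(\<Sum>i\<in>UNIV. \<Sum>j\<in>UNIV. x i j * (ln (B i j * a i powr t * b j powr t) - ln (x i j))) = ln N"
    unfolding eqx by (simp add: sum_distrib_right[symmetric] rows sa)
  then have "Psi1_obj D B a b x = ereal (real D * ln N)"
    unfolding obj_real[OF pos x0] gibbs_identity[OF D tdef xc pos] by simp
  then show ?thesis using xc by blast
qed

lemma obj_le:
  fixes A :: "'a::finite \<Rightarrow> 'a \<Rightarrow> real"
  assumes D: "real D > 0" and tdef: "t = (real D - 1) / real D"
    and A: "\<forall>i j. A i j \<ge> 0" and a: "prob_simplex a" and x: "x \<in> couplings a b"
  shows "Psi1_obj D A a b x = -\<infinity> \<or> (SS t A a b > 0 \<and> Psi1_obj D A a b x \<le> ereal (real D * ln (SS t A a b)))"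
proof (cases "\<forall>i j. x i j > 0 \<longrightarrow> A i j > 0")
  case True
  have x0: "\<forall>i j. x i j \<ge> 0" using coupling_le(1)[OF x] by auto
  have "Psi1_obj D A a b x = ereal (real D * (\<Sum>i\<in>UNIV. \<Sum>j\<in>UNIV. x i j * (ln (A i j * a i powr t * b j powr t) - ln (x i j))))"
    unfolding obj_real[OF True x0] gibbs_identity[OF D tdef x True] ..
  moreover have "(\<Sum>i\<in>UNIV. \<Sum>j\<in>UNIV. x i j * (ln (A i j * a i powr t * b j powr t) - ln (x i j))) \<le> ln (SS t A a b)"
    by (rule gibbs_bound(2)[OF A a x True])
  ultimately show ?thesis using gibbs_bound(1)[OF A a x True] D by simp
next
  case False
  then obtain i0 j0 where ij: "x i0 j0 > 0" "\<not> A i0 j0 > 0" by auto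
  then have A0: "A i0 j0 = 0" using A by (metis order_le_less)
  have ct: "cross_term (A i0 j0) (x i0 j0) = -\<infinity>" unfolding cross_term_def using ij A0 by simp
  have notinf: "cross_term (A i j) (x i j) \<noteq> \<infinity>" for i j unfolding cross_term_def by auto
  have fin: "finite (UNIV :: ('a \<times> 'a) set)" by simp
  have "(\<Sum>(i, j)\<in>UNIV. cross_term (A i j) (x i j)) = cross_term (A i0 j0) (x i0 j0) + (\<Sum>(i, j)\<in>UNIV - {(i0,j0)}. cross_term (A i j) (x i j))"
    by (subst sum.remove[OF fin, of "(i0, j0)"]) auto
  also have "\<dots> = -\<infinity>"
  proof -
    have "(\<Sum>(i, j)\<in>UNIV - {(i0,j0)}. cross_term (A i j) (x i j)) \<noteq> \<infinity>"
      using notinf by (simp add: sum_Pinfty case_prod_unfold)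
    then show ?thesis unfolding ct by simp
  qed
  finally have "Psi1_obj D A a b x = -\<infinity>" unfolding Psi1_obj_def using D by simp
  then show ?thesis by simp
qed

lemma numeric_key:
  fixes t w w' :: real
  assumes t: "1/2 < t" "t < 1" and w: "0 < w" "w \<le> 1" and w': "0 \<le> w'" "w' \<le> 1"
    and ineq: "1 \<le> (w*w') powr t + ((1-w)*(1-w')) powr t"
  shows "w = 1 \<and> w' = 1"
proof -
  define x where "x = w * w'"
  define y where "y = (1-w)*(1-w')"
  have x0: "0 \<le> x" "x \<le> 1" unfolding x_def using w w' by (auto intro: mult_le_one)
  have y0: "0 \<le> y" "y \<le> 1" unfolding y_def using w w' by (auto intro: mult_le_one)
  have sq: "z powr t \<le> sqrt z" if "0 \<le> z" "z \<le> 1" for z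
  proof -
    have "z powr t \<le> z powr (1/2)" using that t by (intro powr_mono') auto
    then show ?thesis using that by (simp add: powr_half_sqrt)
  qed
  have sx: "sqrt x \<le> (w + w')/2" unfolding x_def using w w' by (intro arith_geo_mean_sqrt) auto
  have sy: "sqrt y \<le> ((1-w) + (1-w'))/2" unfolding y_def using w w' by (intro arith_geo_mean_sqrt) auto
  have xcase: "x = 0 \<or> x = 1"
  proof (rule ccontr)
    assume "\<not> (x = 0 \<or> x = 1)"
    then have "0 < x" "x < 1" using x0 by auto
    then have "x powr t < x powr (1/2)" using t by (intro powr_less_mono') auto
    then have "x powr t < sqrt x" using x0 by (simp add: powr_half_sqrt)
    moreover have "sqrt x + sqrt y \<le> 1" using sx sy by (simp add: field_simps)
    moreover have "y powr t \<le> sqrt y" using sq[OF y0] .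
    moreover have "1 \<le> x powr t + y powr t" using ineq unfolding x_def y_def .
    ultimately show False by linarith
  qed
  show ?thesis
  proof (cases "x = 1")
    case True
    show ?thesis
    proof (rule ccontr)
      assume "\<not> (w = 1 \<and> w' = 1)"
      then have "w < 1 \<or> w' < 1" using w w' by auto
      then have "w * w' < 1"
      proof
        assume "w < 1" then have "w * w' \<le> w * 1" using w w' by (intro mult_left_mono) auto
        then show ?thesis using \<open>w < 1\<close> by linarith
      next
        assume "w' < 1" then have "w * w' < w * 1" using w w' by (intro mult_strict_left_mono) auto
        then show ?thesis using w by linarith
      qed
      then show False using True unfolding x_def by simp
    qed
  next
    case False
    then have "x = 0" using xcase by simp
    then have "w' = 0" unfolding x_def using w by simp
    then have "1 \<le> (1-w) powr t" using ineq by simp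
    moreover have "(1-w) powr t < 1"
    proof (cases "1 - w = 0")
      case True then show ?thesis by simp
    next
      case False
      then have "(1-w) powr t < 1 powr t" using w t by (intro powr_less_mono2) auto
      then show ?thesis by simp
    qed
    ultimately show ?thesis by simp
  qed
qed



lemma sum_pairs2: "(\<Sum>u\<in>(UNIV::('a::finite \<times> 'b::finite) set). g u) = (\<Sum>i\<in>UNIV. \<Sum>k\<in>UNIV. g (i,k))"
proof -
  have "(\<Sum>i\<in>UNIV. \<Sum>k\<in>UNIV. g (i,k)) = (\<Sum>(i,k)\<in>UNIV \<times> UNIV. g (i,k))" by (rule sum.cartesian_product)
  then show ?thesis by simp
qed

lemma sum4_swap:
  fixes f :: "'a::finite \<Rightarrow> 'b::finite \<Rightarrow> 'c::finite \<Rightarrow> 'd::finite \<Rightarrow> real"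
  shows "(\<Sum>i\<in>UNIV. \<Sum>k\<in>UNIV. \<Sum>j\<in>UNIV. \<Sum>l\<in>UNIV. f i k j l) = (\<Sum>k\<in>UNIV. \<Sum>l\<in>UNIV. \<Sum>i\<in>UNIV. \<Sum>j\<in>UNIV. f i k j l)"
proof -
  have "(\<Sum>i\<in>UNIV. \<Sum>k\<in>UNIV. \<Sum>j\<in>UNIV. \<Sum>l\<in>UNIV. f i k j l) = (\<Sum>k\<in>UNIV. \<Sum>i\<in>UNIV. \<Sum>j\<in>UNIV. \<Sum>l\<in>UNIV. f i k j l)"
    by (rule sum.swap)
  also have "\<dots> = (\<Sum>k\<in>UNIV. \<Sum>i\<in>UNIV. \<Sum>l\<in>UNIV. \<Sum>j\<in>UNIV. f i k j l)"
    by (intro sum.cong refl sum.swap)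
  also have "\<dots> = (\<Sum>k\<in>UNIV. \<Sum>l\<in>UNIV. \<Sum>i\<in>UNIV. \<Sum>j\<in>UNIV. f i k j l)"
    by (intro sum.cong refl sum.swap)
  finally show ?thesis .
qed

lemma SS_delta:
  fixes B :: "'a::finite \<Rightarrow> 'a \<Rightarrow> real"
  shows "SS t B (\<lambda>i. if i = u then 1 else 0) (\<lambda>j. if j = v then 1 else 0) = B u v"
proof -
  have "B i j * (if i = u then 1 else 0) powr t * (if j = v then 1 else 0) powr t = (if i = u then (if j = v then B i j else 0) else 0)" for i j
    by auto
  then have "SS t B (\<lambda>i. if i = u then 1 else 0) (\<lambda>j. if j = v then 1 else 0)
      = (\<Sum>i\<in>UNIV. if i = u then (\<Sum>j\<in>UNIV. if j = v then B i j else 0) else 0)"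
    unfolding SS_def by (intro sum.cong) auto
  then show ?thesis by simp
qed

lemma delta_simplex: "prob_simplex (\<lambda>i::'a::finite. if i = u then 1 else 0)"
  unfolding prob_simplex_def by simp

lemma exists_pos_entry:
  assumes "irreducible_mat (B :: 'a::finite \<Rightarrow> 'a \<Rightarrow> real)"
  shows "\<exists>u v. B u v > 0"
proof -
  obtain k :: 'a where True by simp
  have "(k,k) \<in> {(u, v). B u v > 0}\<^sup>+" using assms unfolding irreducible_mat_def by blast
  then show ?thesis by (induct rule: trancl_induct) auto
qed

theorem lemma2:
  fixes \<Delta> :: nat
    and B :: "'q::finite \<Rightarrow> 'q \<Rightarrow> real"
    and \<alpha> \<beta> :: "'q \<Rightarrow> real"
    and \<gamma> \<delta> :: "'q \<times> 'q \<Rightarrow> real"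
  assumes "\<Delta> \<ge> 3"
    and "sym_nonneg_mat B" and "irreducible_mat B" and "regular_mat B"
    and "prob_simplex \<alpha>" and "prob_simplex \<beta>"
    and "\<forall>i k. \<gamma> (i, k) \<ge> 0" and "\<forall>j l. \<delta> (j, l) \<ge> 0"
    and "\<forall>k. (\<Sum>i\<in>UNIV. \<gamma> (i, k)) = \<alpha> k"
    and "\<forall>i. (\<Sum>k\<in>UNIV. \<gamma> (i, k)) = \<alpha> i"
    and "\<forall>l. (\<Sum>j\<in>UNIV. \<delta> (j, l)) = \<beta> l"
    and "\<forall>j. (\<Sum>l\<in>UNIV. \<delta> (j, l)) = \<beta> j"
    and "Psi1 \<Delta> (kron B B) \<gamma> \<delta> =
           2 * (SUP ab\<in>{(a', b'). prob_simplex a' \<and> prob_simplex b'}. Psi1 \<Delta> B (fst ab) (snd ab))"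
  shows "(\<forall>i k. \<gamma> (i, k) = \<alpha> i * \<alpha> k) \<and> (\<forall>j l. \<delta> (j, l) = \<beta> j * \<beta> l)"
proof -
  define t where "t = (real \<Delta> - 1) / real \<Delta>"
  have D: "real \<Delta> > 0" using assms(1) by simp
  have t01: "0 < t" "t < 1" using assms(1) by (auto simp: t_def field_simps)
  have thalf: "1/2 < t" using assms(1) by (auto simp: t_def field_simps)
  have B0: "\<forall>i j. B i j \<ge> 0" and Bs: "\<forall>i j. B i j = B j i"
    using assms(2) unfolding sym_nonneg_mat_def by auto
  have a0: "\<forall>i. \<alpha> i \<ge> 0" and asum: "(\<Sum>i\<in>UNIV. \<alpha> i) = 1" using assms(5) unfolding prob_simplex_def by auto
  have b0: "\<forall>i. \<beta> i \<ge> 0" and bsum: "(\<Sum>i\<in>UNIV. \<beta> i) = 1" using assms(6) unfolding prob_simplex_def by auto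
  have g0: "\<gamma> u \<ge> 0" for u using assms(7) by (cases u) auto
  have d0: "\<delta> u \<ge> 0" for u using assms(8) by (cases u) auto
  obtain a1 b1 where a1: "prob_simplex a1" and b1: "prob_simplex b1"
    and amax: "\<forall>a' b'. prob_simplex a' \<longrightarrow> prob_simplex b' \<longrightarrow> SS t B a' b' \<le> SS t B a1 b1"
    using max_exists[OF t01(1), of B] by blast
  define N where "N = SS t B a1 b1"
  have maxN: "\<forall>a' b'. prob_simplex a' \<longrightarrow> prob_simplex b' \<longrightarrow> SS t B a' b' \<le> N"
    using amax unfolding N_def by blast
  obtain u v where uv: "B u v > 0" using exists_pos_entry[OF assms(3)] by blast
  have "SS t B (\<lambda>i. if i = u then 1 else 0) (\<lambda>j. if j = v then 1 else 0) \<le> N"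
    using maxN delta_simplex[of u] delta_simplex[of v] by blast
  then have "B u v \<le> N" unfolding SS_delta .
  then have Npos: "N > 0" using uv by simp
  obtain x1 where x1: "x1 \<in> couplings a1 b1" and ox1: "Psi1_obj \<Delta> B a1 b1 x1 = ereal (real \<Delta> * ln N)"
    using achieve[OF D t_def t01 B0 Bs Npos maxN a1 b1 N_def[symmetric]] by blast
  define M where "M = (SUP ab\<in>{(a', b'). prob_simplex a' \<and> prob_simplex b'}. Psi1 \<Delta> B (fst ab) (snd ab))"
  have "ereal (real \<Delta> * ln N) \<le> Psi1 \<Delta> B a1 b1"
    unfolding Psi1_def ox1[symmetric] using x1 by (rule SUP_upper)
  also have "Psi1 \<Delta> B a1 b1 \<le> M"
    unfolding M_def using a1 b1 by (intro SUP_upper2[of "(a1, b1)"]) auto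
  finally have hM: "ereal (real \<Delta> * ln N) \<le> M" .
  have "2 * ereal (real \<Delta> * ln N) \<le> 2 * M" by (rule ereal_mult_left_mono[OF hM]) simp
  then have h2M: "ereal (2 * (real \<Delta> * ln N)) \<le> Psi1 \<Delta> (kron B B) \<gamma> \<delta>"
    using assms(13) unfolding M_def[symmetric] by simp
  have pg: "prob_simplex \<gamma>" unfolding prob_simplex_def using g0 asum assms(10)
    by (simp add: sum_pairs2[of \<gamma>])
  have KB0: "\<forall>u w. kron B B u w \<ge> 0" using B0 unfolding kron_def by auto
  define T where "T = SS t (kron B B) \<gamma> \<delta>"
  have objs: "Psi1_obj \<Delta> (kron B B) \<gamma> \<delta> X = -\<infinity> \<or> (T > 0 \<and> Psi1_obj \<Delta> (kron B B) \<gamma> \<delta> X \<le> ereal (real \<Delta> * ln T))"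
    if "X \<in> couplings \<gamma> \<delta>" for X
    using obj_le[OF D t_def KB0 pg that] unfolding T_def .
  have Tpos: "T > 0"
  proof (rule ccontr)
    assume "\<not> T > 0"
    then have "\<forall>X\<in>couplings \<gamma> \<delta>. Psi1_obj \<Delta> (kron B B) \<gamma> \<delta> X = -\<infinity>" using objs by blast
    then have "Psi1 \<Delta> (kron B B) \<gamma> \<delta> \<le> -\<infinity>" unfolding Psi1_def by (intro SUP_least) auto
    then show False using h2M by simp
  qed
  have "Psi1 \<Delta> (kron B B) \<gamma> \<delta> \<le> ereal (real \<Delta> * ln T)"
    unfolding Psi1_def
  proof (intro SUP_least)
    fix X assume "X \<in> couplings \<gamma> \<delta>"
    then show "Psi1_obj \<Delta> (kron B B) \<gamma> \<delta> X \<le> ereal (real \<Delta> * ln T)" using objs by force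
  qed
  then have "ereal (2 * (real \<Delta> * ln N)) \<le> ereal (real \<Delta> * ln T)" using h2M by (rule order.trans[rotated])
  then have "real \<Delta> * (2 * ln N) \<le> real \<Delta> * ln T" by (simp add: algebra_simps)
  then have "2 * ln N \<le> ln T" using D by simp
  then have "ln (N * N) \<le> ln T" using Npos by (simp add: ln_mult)
  then have TN: "N * N \<le> T" using Npos Tpos by simp
  define U where "U k l = SS t B (\<lambda>i. \<gamma> (i, k)) (\<lambda>j. \<delta> (j, l))" for k l
  have Tdec: "T = (\<Sum>k\<in>UNIV. \<Sum>l\<in>UNIV. B k l * U k l)"
  proof -
    have "T = (\<Sum>i\<in>UNIV. \<Sum>k\<in>UNIV. \<Sum>j\<in>UNIV. \<Sum>l\<in>UNIV. B i j * B k l * \<gamma> (i,k) powr t * \<delta> (j,l) powr t)"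
      unfolding T_def SS_def by (simp add: sum_pairs2 kron_def)
    also have "\<dots> = (\<Sum>k\<in>UNIV. \<Sum>l\<in>UNIV. \<Sum>i\<in>UNIV. \<Sum>j\<in>UNIV. B i j * B k l * \<gamma> (i,k) powr t * \<delta> (j,l) powr t)"
      by (rule sum4_swap)
    also have "\<dots> = (\<Sum>k\<in>UNIV. \<Sum>l\<in>UNIV. B k l * U k l)"
      unfolding U_def SS_def by (simp add: sum_distrib_left mult_ac)
    finally show ?thesis .
  qed
  have Ub: "U k l \<le> N * \<alpha> k powr t * \<beta> l powr t" for k l
    using SS_bound_scaled[OF maxN Npos t01(1), of "\<lambda>i. \<gamma> (i, k)" "\<lambda>j. \<delta> (j, l)"] assms(9,11) g0 d0
    unfolding U_def by simp
  have Sab: "SS t B \<alpha> \<beta> \<le> N" using maxN assms(5,6) by blast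
  have "T \<le> (\<Sum>k\<in>UNIV. \<Sum>l\<in>UNIV. B k l * (N * \<alpha> k powr t * \<beta> l powr t))"
    unfolding Tdec using B0 Ub by (intro sum_mono mult_left_mono) auto
  also have "\<dots> = N * SS t B \<alpha> \<beta>" unfolding SS_def by (simp add: sum_distrib_left mult_ac)
  finally have TS: "T \<le> N * SS t B \<alpha> \<beta>" .
  have SabN: "SS t B \<alpha> \<beta> = N"
  proof -
    have "N * N \<le> N * SS t B \<alpha> \<beta>" using TN TS by simp
    then have "N \<le> SS t B \<alpha> \<beta>" using Npos by simp
    then show ?thesis using Sab by simp
  qed
  have TeqN: "T = N * N" using TN TS SabN by simp
  define dl where "dl k l = B k l * (N * \<alpha> k powr t * \<beta> l powr t) - B k l * U k l" for k l
  have dl0: "\<forall>k l. dl k l \<ge> 0" unfolding dl_def using B0 Ub by (simp add: mult_left_mono)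
  have "(\<Sum>k\<in>UNIV. \<Sum>l\<in>UNIV. dl k l) = N * SS t B \<alpha> \<beta> - T"
  proof -
    have "(\<Sum>k\<in>UNIV. \<Sum>l\<in>UNIV. B k l * (N * \<alpha> k powr t * \<beta> l powr t)) = N * SS t B \<alpha> \<beta>"
      unfolding SS_def by (simp add: sum_distrib_left mult_ac)
    then show ?thesis unfolding dl_def Tdec by (simp add: sum_subtractf)
  qed
  then have "(\<Sum>k\<in>UNIV. \<Sum>l\<in>UNIV. dl k l) = 0" using SabN TeqN by simp
  then have rs: "\<forall>k. (\<Sum>l\<in>UNIV. dl k l) = 0" using dl0 by (intro nonneg_sum0) (auto intro: sum_nonneg)
  have dlz: "\<forall>k l. dl k l = 0"
  proof (intro allI)
    fix k l
    have "\<forall>l. dl k l = 0" using rs dl0 by (intro nonneg_sum0) auto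
    then show "dl k l = 0" by simp
  qed
  define gk where "gk k = (\<lambda>i. \<gamma> (i, k) / \<alpha> k)" for k
  define dk where "dk l = (\<lambda>j. \<delta> (j, l) / \<beta> l)" for l
  have pgk: "prob_simplex (gk k)" if "\<alpha> k > 0" for k
    unfolding prob_simplex_def gk_def using that g0 assms(9)
    by (simp add: sum_divide_distrib[symmetric])
  have pdk: "prob_simplex (dk l)" if "\<beta> l > 0" for l
    unfolding prob_simplex_def dk_def using that d0 assms(11)
    by (simp add: sum_divide_distrib[symmetric])
  have mp: "gk k = FF t B N (dk l) \<and> dk l = FF t B N (gk k)"
    if kl: "\<alpha> k > 0" "\<beta> l > 0" "B k l > 0" for k l
  proof -
    have "B k l * U k l = B k l * (N * \<alpha> k powr t * \<beta> l powr t)" using dlz[rule_format, of k l] unfolding dl_def by linarith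
    then have Ukl: "U k l = N * \<alpha> k powr t * \<beta> l powr t" using kl(3) by simp
    have "U k l = \<alpha> k powr t * \<beta> l powr t * SS t B (gk k) (dk l)"
      unfolding U_def gk_def dk_def using kl g0 d0 by (intro SS_scale) auto
    then have "SS t B (gk k) (dk l) = N" using Ukl kl by simp
    then show ?thesis using mp_char[OF t01 B0 Bs Npos maxN pgk[OF kl(1)] pdk[OF kl(2)]] by auto
  qed
  have aF: "\<alpha> = FF t B N \<beta>" and bF: "\<beta> = FF t B N \<alpha>"
    using mp_char[OF t01 B0 Bs Npos maxN assms(5,6) SabN] by auto
  obtain k0 where k0: "\<alpha> k0 > 0"
  proof -
    have "\<not> (\<forall>i. \<alpha> i = 0)"
    proof
      assume "\<forall>i. \<alpha> i = 0"
      then have "(\<Sum>i\<in>UNIV. \<alpha> i) = 0" by simp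
      then show False using asum by simp
    qed
    then obtain k where "\<alpha> k \<noteq> 0" by blast
    then have "\<alpha> k > 0" using a0[rule_format, of k] by linarith
    then show ?thesis using that by blast
  qed
  obtain l0 where l0: "B k0 l0 > 0" "\<beta> l0 > 0"
  proof -
    have "FF t B N \<beta> k0 > 0" using k0 aF by simp
    then have "(\<Sum>j\<in>UNIV. B k0 j * \<beta> j powr t) \<noteq> 0" unfolding FF_def by auto
    then obtain j where j: "B k0 j * \<beta> j powr t \<noteq> 0" by (meson sum.neutral)
    have "B k0 j \<noteq> 0" using j by auto
    then have Bj: "B k0 j > 0" using B0[rule_format, of k0 j] by linarith
    have "\<beta> j \<noteq> 0" using j by auto
    then have bj: "\<beta> j > 0" using b0[rule_format, of j] by linarith
    show ?thesis using that[OF Bj bj] .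
  qed
  define g where "g = gk k0"
  define d where "d = dk l0"
  have gdd: "gk k0 = FF t B N (dk l0) \<and> dk l0 = FF t B N (gk k0)" by (rule mp[OF k0 l0(2) l0(1)])
  have gd: "g = FF t B N d" "d = FF t B N g" unfolding g_def d_def using gdd by (rule conjunct1, rule conjunct2)
  define Kp where "Kp = {k. \<alpha> k > 0 \<and> gk k = g}"
  define Lp where "Lp = {l. \<beta> l > 0 \<and> dk l = d}"
  have offzero: "B k l * \<alpha> k powr t * \<beta> l powr t = 0" if "(k \<in> Kp) \<noteq> (l \<in> Lp)" for k l
  proof (cases "\<alpha> k = 0 \<or> \<beta> l = 0 \<or> B k l = 0")
    case True then show ?thesis by auto
  next
    case False
    then have pos: "\<alpha> k > 0" "\<beta> l > 0" "B k l > 0"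
      using a0[rule_format, of k] b0[rule_format, of l] B0[rule_format, of k l] by auto
    show ?thesis
    proof (cases "k \<in> Kp")
      case True
      then have "l \<notin> Lp" using that by simp
      moreover have "dk l = d"
      proof -
        have "gk k = g" using True unfolding Kp_def by simp
        moreover have "dk l = FF t B N (gk k)" using mp[OF pos] by (rule conjunct2)
        ultimately show ?thesis using gd(2) by simp
      qed
      ultimately show ?thesis using pos unfolding Lp_def by simp
    next
      case False
      then have "l \<in> Lp" using that by simp
      then have "dk l = d" unfolding Lp_def by simp
      moreover have "gk k = FF t B N (dk l)" using mp[OF pos] by (rule conjunct1)
      ultimately have "gk k = g" using gd(1) by simp
      then show ?thesis using False pos unfolding Kp_def by simp
    qed
  qed
  define aK where "aK k = (if k \<in> Kp then \<alpha> k else 0)" for k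
  define aKc where "aKc k = (if k \<in> Kp then 0 else \<alpha> k)" for k
  define bL where "bL l = (if l \<in> Lp then \<beta> l else 0)" for l
  define bLc where "bLc l = (if l \<in> Lp then 0 else \<beta> l)" for l
  have split: "SS t B \<alpha> \<beta> = SS t B aK bL + SS t B aKc bLc"
  proof -
    have "B k l * \<alpha> k powr t * \<beta> l powr t = B k l * aK k powr t * bL l powr t + B k l * aKc k powr t * bLc l powr t" for k l
      using offzero[of k l] unfolding aK_def aKc_def bL_def bLc_def
      by (cases "k \<in> Kp"; cases "l \<in> Lp") auto
    then show ?thesis unfolding SS_def by (simp add: sum.distrib)
  qed
  define w where "w = (\<Sum>k\<in>UNIV. aK k)"
  define w' where "w' = (\<Sum>l\<in>UNIV. bL l)"
  have aK0: "\<forall>k. aK k \<ge> 0" "\<forall>k. aKc k \<ge> 0" unfolding aK_def aKc_def using a0 by auto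
  have bL0: "\<forall>k. bL k \<ge> 0" "\<forall>k. bLc k \<ge> 0" unfolding bL_def bLc_def using b0 by auto
  have wc: "(\<Sum>k\<in>UNIV. aKc k) = 1 - w"
  proof -
    have "(\<Sum>k\<in>UNIV. aK k) + (\<Sum>k\<in>UNIV. aKc k) = (\<Sum>k\<in>UNIV. \<alpha> k)"
      proof -
      have "aK k + aKc k = \<alpha> k" for k unfolding aK_def aKc_def by simp
      then show ?thesis by (simp add: sum.distrib[symmetric])
    qed
    then show ?thesis using asum unfolding w_def by simp
  qed
  have wc': "(\<Sum>l\<in>UNIV. bLc l) = 1 - w'"
  proof -
    have "(\<Sum>k\<in>UNIV. bL k) + (\<Sum>k\<in>UNIV. bLc k) = (\<Sum>k\<in>UNIV. \<beta> k)"
      proof -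
      have "bL k + bLc k = \<beta> k" for k unfolding bL_def bLc_def by simp
      then show ?thesis by (simp add: sum.distrib[symmetric])
    qed
    then show ?thesis using bsum unfolding w'_def by simp
  qed
  have s1: "SS t B aK bL \<le> N * w powr t * w' powr t"
    using SS_bound_scaled[OF maxN Npos t01(1) aK0(1) bL0(1)] unfolding w_def w'_def .
  have s2: "SS t B aKc bLc \<le> N * (1-w) powr t * (1-w') powr t"
    using SS_bound_scaled[OF maxN Npos t01(1) aK0(2) bL0(2)] unfolding wc wc' .
  have w0: "w \<ge> 0" "w' \<ge> 0" unfolding w_def w'_def using aK0 bL0 by (auto intro: sum_nonneg)
  have "(\<Sum>k\<in>UNIV. aKc k) \<ge> 0" using aK0 by (intro sum_nonneg) auto
  moreover have "(\<Sum>k\<in>UNIV. bLc k) \<ge> 0" using bL0 by (intro sum_nonneg) auto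
  ultimately have w1: "1 - w \<ge> 0" "1 - w' \<ge> 0" using wc wc' by linarith+
  have wpos: "w > 0"
  proof -
    have "k0 \<in> Kp" unfolding Kp_def g_def using k0 by simp
    then have "aK k0 = \<alpha> k0" unfolding aK_def by simp
    moreover have "aK k0 \<le> w" unfolding w_def using aK0 by (intro member_le_sum) auto
    ultimately show ?thesis using k0 by simp
  qed
  have "N \<le> N * w powr t * w' powr t + N * (1-w) powr t * (1-w') powr t" using split SabN s1 s2 by simp
  moreover have "(w * w') powr t = w powr t * w' powr t" using w0 by (simp add: powr_mult)
  moreover have "((1-w) * (1-w')) powr t = (1-w) powr t * (1-w') powr t" using w1 by (simp add: powr_mult)
  ultimately have "N * 1 \<le> N * ((w * w') powr t + ((1-w) * (1-w')) powr t)"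
    by (simp add: distrib_left mult.assoc)
  then have "1 \<le> (w * w') powr t + ((1-w) * (1-w')) powr t" using Npos by simp
  then have ww: "w = 1 \<and> w' = 1" using numeric_key[OF thalf t01(2) wpos _ w0(2)] w1 by simp
  have allK: "gk k = g" if "\<alpha> k > 0" for k
  proof -
    have "\<forall>k. aKc k = 0" using wc ww aK0 by (intro nonneg_sum0) auto
    then have "aKc k = 0" by simp
    then have "k \<in> Kp" using that unfolding aKc_def by (auto split: if_splits)
    then show ?thesis unfolding Kp_def by simp
  qed
  have allL: "dk l = d" if "\<beta> l > 0" for l
  proof -
    have "\<forall>k. bLc k = 0" using wc' ww bL0 by (intro nonneg_sum0) auto
    then have "bLc l = 0" by simp
    then have "l \<in> Lp" using that unfolding bLc_def by (auto split: if_splits)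
    then show ?thesis unfolding Lp_def by simp
  qed
  have gform: "\<gamma> (i, k) = \<alpha> k * g i" for i k
  proof (cases "\<alpha> k > 0")
    case True
    have "g i = \<gamma> (i, k) / \<alpha> k" using fun_cong[OF allK[OF True], of i] unfolding gk_def by simp
    then show ?thesis using True by simp
  next
    case False
    then have ak: "\<alpha> k = 0" using a0[rule_format, of k] by linarith
    have "\<gamma> (i, k) \<le> (\<Sum>i\<in>UNIV. \<gamma> (i, k))" using g0 by (intro member_le_sum) auto
    then have "\<gamma> (i, k) = 0" using ak assms(9) g0[of "(i,k)"] by simp
    then show ?thesis using ak by simp
  qed
  have dform: "\<delta> (j, l) = \<beta> l * d j" for j l
  proof (cases "\<beta> l > 0")
    case True
    have "d j = \<delta> (j, l) / \<beta> l" using fun_cong[OF allL[OF True], of j] unfolding dk_def by simp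
    then show ?thesis using True by simp
  next
    case False
    then have bl: "\<beta> l = 0" using b0[rule_format, of l] by linarith
    have "\<delta> (j, l) \<le> (\<Sum>j\<in>UNIV. \<delta> (j, l))" using d0 by (intro member_le_sum) auto
    then have "\<delta> (j, l) = 0" using bl assms(11) d0[of "(j,l)"] by simp
    then show ?thesis using bl by simp
  qed
  have ag: "\<alpha> i = g i" for i
  proof -
    have "\<alpha> i = (\<Sum>k\<in>UNIV. \<gamma> (i, k))" using assms(10) by simp
    also have "\<dots> = (\<Sum>k\<in>UNIV. \<alpha> k) * g i" unfolding gform by (simp add: sum_distrib_right)
    finally show ?thesis using asum by simp
  qed
  have bd: "\<beta> j = d j" for j
  proof -
    have "\<beta> j = (\<Sum>l\<in>UNIV. \<delta> (j, l))" using assms(12) by simp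
    also have "\<dots> = (\<Sum>l\<in>UNIV. \<beta> l) * d j" unfolding dform by (simp add: sum_distrib_right)
    finally show ?thesis using bsum by simp
  qed
  show ?thesis using gform dform ag bd by (simp add: mult.commute)
qed


end
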